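(* In the setting described in the context, let $F$ be strongly convex with respect to $\|\cdot\|_L$ with convexity parameter $\mu>0$, and choose accuracy $\epsilon>0$, confidence $0<\rho<1$, and $$k\geq\frac{n}{1-\gamma_\mu}\log\left(\frac{F(x_0)-F^*}{\rho\epsilon}\right),$$ where $\gamma_\mu=1-\frac\mu4$ if $\mu\leq2$ and $\gamma_\mu=\frac1\mu$ otherwise. If $x_k$ is the random point generated by UCDC$(x_0)$, then $\mathbf{P}(F(x_k)-F^*\leq\epsilon)\geq1-\rho$.
   Context: Let $U\in\mathbf{R}^{N\times N}$ be a column permutation of the $N\times N$ identity matrix, partitioned as $U=[U_1,\dots,U_n]$ with $U_i\in\mathbf{R}^{N\times N_i}$, $\sum_iN_i=N$. For $x\in\mathbf{R}^N$ write $x^{(i)}=U_i^Tx$. Each $\mathbf{R}^{N_i}$ carries the norm $\|t\|_{(i)}=\langle B_it,t\rangle^{1/2}$ and dual norm $\|t\|_{(i)}^*=\langle B_i^{-1}t,t\rangle^{1/2}$ with $B_i$ positive definite. Consider minimizing $F(x)=f(x)+\Psi(x)$ over $\mathbf{R}^N$, where $f$ is convex and differentiable with $\|\nabla_if(x+U_it)-\nabla_if(x)\|_{(i)}^*\leq L_i\|t\|_{(i)}$ for all $x,t,i$ (constants $L_i>0$, $\nabla_if(x)=U_i^T\nabla f(x)$), and $\Psi(x)=\sum_i\Psi_i(x^{(i)})$ with each $\Psi_i$ proper closed convex. The problem has a minimizer; $F^*$ is the optimal value. Let $\|x\|_L=(\sum_iL_i\|x^{(i)}\|_{(i)}^2)^{1/2}$.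 Strong convexity w.r.t. $\|\cdot\|_L$ with parameter $\mu$: $F(x)\geq F(y)+\langle F'(y),x-y\rangle+\frac\mu2\|x-y\|_L^2$ for all $x,y\in\mathrm{dom}\,F$ and all subgradients $F'(y)$. Algorithm UCDC$(x_0)$: for $k=0,1,2,\dots$, choose $i\in\{1,\dots,n\}$ uniformly at random (independently), compute $T^{(i)}(x_k)=\arg\min_{t\in\mathbf{R}^{N_i}}\{\langle\nabla_if(x_k),t\rangle+\frac{L_i}{2}\|t\|_{(i)}^2+\Psi_i(x_k^{(i)}+t)\}$ and set $x_{k+1}=x_k+U_iT^{(i)}(x_k)$. *)

theory Defs
  imports "HOL-Analysis.Analysis" "HOL-Probability.Probability"
begin

text \<open>The permutation matrix U is encoded by
  sigma: the column number p (p < N) of U is the unit vector e_(sigma p).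
  Blocks are consecutive column groups: block i (i < n, 0-based) consists of the columns
  off i, ..., off i + Nb i - 1.  A block vector t in R^(Nb i) is a function nat => real
  whose entries beyond Nb i are zero.\<close>

definition off :: "(nat \<Rightarrow> nat) \<Rightarrow> nat \<Rightarrow> nat" where
  "off Nb i = (\<Sum>l<i. Nb l)"

definition bsub :: "(nat \<Rightarrow> nat) \<Rightarrow> nat \<Rightarrow> (nat \<Rightarrow> real) set" where
  "bsub Nb i = {t. \<forall>j. Nb i \<le> j \<longrightarrow> t j = 0}"

definition blk :: "(nat \<Rightarrow> 'N::finite) \<Rightarrow> (nat \<Rightarrow> nat) \<Rightarrow> nat \<Rightarrow> real^'N \<Rightarrow> (nat \<Rightarrow> real)" where
  "blk \<sigma> Nb i x = (\<lambda>j. if j < Nb i then x $ \<sigma> (off Nb i + j) else 0)"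

definition Uemb :: "(nat \<Rightarrow> 'N::finite) \<Rightarrow> (nat \<Rightarrow> nat) \<Rightarrow> nat \<Rightarrow> (nat \<Rightarrow> real) \<Rightarrow> real^'N" where
  "Uemb \<sigma> Nb i t = (\<chi> k. let p = inv_into {..<CARD('N)} \<sigma> k in
      if off Nb i \<le> p \<and> p < off Nb i + Nb i then t (p - off Nb i) else 0)"

definition qform :: "(nat \<Rightarrow> nat \<Rightarrow> real) \<Rightarrow> nat \<Rightarrow> (nat \<Rightarrow> real) \<Rightarrow> real" where
  "qform M m t = (\<Sum>j<m. \<Sum>l<m. M j l * t l * t j)"

definition pos_def_mat :: "(nat \<Rightarrow> nat \<Rightarrow> real) \<Rightarrow> nat \<Rightarrow> bool" where
  "pos_def_mat M m \<longleftrightarrow> (\<forall>j<m. \<forall>l<m. M j l = M l j) \<and>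
     (\<forall>t. (\<exists>j<m. t j \<noteq> 0) \<longrightarrow> qform M m t > 0)"

definition is_inv_mat :: "(nat \<Rightarrow> nat \<Rightarrow> real) \<Rightarrow> (nat \<Rightarrow> nat \<Rightarrow> real) \<Rightarrow> nat \<Rightarrow> bool" where
  "is_inv_mat M Mi m \<longleftrightarrow> (\<forall>j<m. \<forall>l<m. (\<Sum>p<m. M j p * Mi p l) = (if j = l then 1 else 0))"

definition bnorm :: "(nat \<Rightarrow> nat \<Rightarrow> nat \<Rightarrow> real) \<Rightarrow> (nat \<Rightarrow> nat) \<Rightarrow> nat \<Rightarrow> (nat \<Rightarrow> real) \<Rightarrow> real" where
  "bnorm B Nb i t = sqrt (qform (B i) (Nb i) t)"

definition dnorm :: "(nat \<Rightarrow> nat \<Rightarrow> nat \<Rightarrow> real) \<Rightarrow> (nat \<Rightarrow> nat) \<Rightarrow> nat \<Rightarrow> (nat \<Rightarrow> real) \<Rightarrow> real" where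
  "dnorm Binv Nb i t = sqrt (qform (Binv i) (Nb i) t)"

definition econvex_on :: "(nat \<Rightarrow> real) set \<Rightarrow> ((nat \<Rightarrow> real) \<Rightarrow> ereal) \<Rightarrow> bool" where
  "econvex_on S g \<longleftrightarrow> (\<forall>x\<in>S. \<forall>y\<in>S. \<forall>u::real. 0 < u \<and> u < 1 \<longrightarrow>
      g (\<lambda>j. (1 - u) * x j + u * y j) \<le> ereal (1 - u) * g x + ereal u * g y)"

definition eproper_on :: "(nat \<Rightarrow> real) set \<Rightarrow> ((nat \<Rightarrow> real) \<Rightarrow> ereal) \<Rightarrow> bool" where
  "eproper_on S g \<longleftrightarrow> (\<forall>x\<in>S. g x \<noteq> -\<infinity>) \<and> (\<exists>x\<in>S. g x \<noteq> \<infinity>)"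

text \<open>closed = epigraph is closed (product topology on nat => real, which is the Euclidean
  topology on the finite-dimensional block space)\<close>
definition eclosed_on :: "(nat \<Rightarrow> real) set \<Rightarrow> ((nat \<Rightarrow> real) \<Rightarrow> ereal) \<Rightarrow> bool" where
  "eclosed_on S g \<longleftrightarrow> closed {(x, a::real). x \<in> S \<and> g x \<le> ereal a}"

definition Fobj :: "(real^'N::finite \<Rightarrow> real) \<Rightarrow> (nat \<Rightarrow> (nat \<Rightarrow> real) \<Rightarrow> ereal) \<Rightarrow>
    (nat \<Rightarrow> 'N) \<Rightarrow> (nat \<Rightarrow> nat) \<Rightarrow> nat \<Rightarrow> real^'N \<Rightarrow> ereal" where
  "Fobj f \<Psi> \<sigma> Nb n x = ereal (f x) + (\<Sum>i<n. \<Psi> i (blk \<sigma> Nb i x))"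

definition Lnorm_sq :: "(nat \<Rightarrow> real) \<Rightarrow> (nat \<Rightarrow> nat \<Rightarrow> nat \<Rightarrow> real) \<Rightarrow>
    (nat \<Rightarrow> 'N::finite) \<Rightarrow> (nat \<Rightarrow> nat) \<Rightarrow> nat \<Rightarrow> real^'N \<Rightarrow> real" where
  "Lnorm_sq L B \<sigma> Nb n x = (\<Sum>i<n. L i * (bnorm B Nb i (blk \<sigma> Nb i x))\<^sup>2)"

definition subgrad :: "(real^'N::finite \<Rightarrow> ereal) \<Rightarrow> real^'N \<Rightarrow> real^'N \<Rightarrow> bool" where
  "subgrad F y g \<longleftrightarrow> (\<forall>x. F y + ereal (inner g (x - y)) \<le> F x)"

definition Tblk :: "(real^'N::finite \<Rightarrow> real^'N) \<Rightarrow> (nat \<Rightarrow> real) \<Rightarrow> (nat \<Rightarrow> nat \<Rightarrow> nat \<Rightarrow> real) \<Rightarrow>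
    (nat \<Rightarrow> (nat \<Rightarrow> real) \<Rightarrow> ereal) \<Rightarrow> (nat \<Rightarrow> 'N) \<Rightarrow> (nat \<Rightarrow> nat) \<Rightarrow> nat \<Rightarrow> real^'N \<Rightarrow> (nat \<Rightarrow> real)" where
  "Tblk gf L B \<Psi> \<sigma> Nb i x =
     (let obj = (\<lambda>t. ereal ((\<Sum>j<Nb i. blk \<sigma> Nb i (gf x) j * t j) + L i / 2 * (bnorm B Nb i t)\<^sup>2)
                     + \<Psi> i (\<lambda>j. blk \<sigma> Nb i x j + t j))
      in SOME t. t \<in> bsub Nb i \<and> (\<forall>s\<in>bsub Nb i. obj t \<le> obj s))"

text \<open>x_k of UCDC(x0) when the chosen block indices are the list is (0-based, in order)\<close>
definition ucdc :: "(real^'N::finite \<Rightarrow> real^'N) \<Rightarrow> (nat \<Rightarrow> real) \<Rightarrow> (nat \<Rightarrow> nat \<Rightarrow> nat \<Rightarrow> real) \<Rightarrow>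
    (nat \<Rightarrow> (nat \<Rightarrow> real) \<Rightarrow> ereal) \<Rightarrow> (nat \<Rightarrow> 'N) \<Rightarrow> (nat \<Rightarrow> nat) \<Rightarrow> real^'N \<Rightarrow> nat list \<Rightarrow> real^'N" where
  "ucdc gf L B \<Psi> \<sigma> Nb x0 is = fold (\<lambda>i x. x + Uemb \<sigma> Nb i (Tblk gf L B \<Psi> \<sigma> Nb i x)) is x0"

text \<open>uniform i.i.d. choice of k block indices from {0..<n}\<close>
definition index_seqs :: "nat \<Rightarrow> nat \<Rightarrow> nat list set" where
  "index_seqs n k = {is. length is = k \<and> set is \<subseteq> {..<n}}"

definition gamma_mu :: "real \<Rightarrow> real" where
  "gamma_mu \<mu> = (if \<mu> \<le> 2 then 1 - \<mu> / 4 else 1 / \<mu>)"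

end

theory Submission
  imports Defs
begin


lemma off_Suc: "off Nb (Suc i) = off Nb i + Nb i"
  by (simp add: off_def)

lemma off_mono: "i \<le> j \<Longrightarrow> off Nb i \<le> off Nb j"
  unfolding off_def by (rule sum_mono2) auto

lemma sum_split_add: "(\<Sum>p<a+(b::nat). h p) = (\<Sum>p<a. h p) + (\<Sum>j<b. h (a + j))"
  by (induction b) (auto simp: add.assoc)

lemma sum_blocks: "(\<Sum>p<off Nb m. h p) = (\<Sum>i<m. \<Sum>j<Nb i. h (off Nb i + j))"
  by (induction m) (auto simp: off_Suc sum_split_add off_def[of _ 0])

locale blocks =
  fixes \<sigma> :: "nat \<Rightarrow> 'N::finite" and Nb :: "nat \<Rightarrow> nat" and n :: nat
  assumes perm: "bij_betw \<sigma> {..<CARD('N)} UNIV"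
    and blocks: "(\<Sum>i<n. Nb i) = CARD('N)"
begin

lemma off_n: "off Nb n = CARD('N)" using blocks by (simp add: off_def)

lemma off_le: "i < n \<Longrightarrow> off Nb i + Nb i \<le> CARD('N)"
  using off_mono[of "Suc i" n Nb] off_n by (simp add: off_Suc)

lemma inv_sigma: "p < CARD('N) \<Longrightarrow> inv_into {..<CARD('N)} \<sigma> (\<sigma> p) = p"
  using perm by (simp add: bij_betw_def inv_into_f_f)

lemma disjoint_blocks:
  assumes "i < n" "j < n" "i \<noteq> j" "a < Nb j"
  shows "\<not> (off Nb i \<le> off Nb j + a \<and> off Nb j + a < off Nb i + Nb i)"
proof (cases "i < j")
  case True
  then have "off Nb i + Nb i \<le> off Nb j" using off_mono[of "Suc i" j Nb] by (simp add: off_Suc)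
  then show ?thesis by auto
next
  case False
  then have "j < i" using assms by auto
  then have "off Nb j + Nb j \<le> off Nb i" using off_mono[of "Suc j" i Nb] by (simp add: off_Suc)
  then show ?thesis using assms by auto
qed

lemma Uemb_nth: "p < CARD('N) \<Longrightarrow> Uemb \<sigma> Nb i t $ \<sigma> p =
   (if off Nb i \<le> p \<and> p < off Nb i + Nb i then t (p - off Nb i) else 0)"
  by (simp add: Uemb_def inv_sigma Let_def)

lemma blk_Uemb_same: "i < n \<Longrightarrow> t \<in> bsub Nb i \<Longrightarrow> blk \<sigma> Nb i (Uemb \<sigma> Nb i t) = t"
proof
  fix j assume i: "i < n" and t: "t \<in> bsub Nb i"
  show "blk \<sigma> Nb i (Uemb \<sigma> Nb i t) j = t j"
  proof (cases "j < Nb i")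
    case True
    then have "off Nb i + j < CARD('N)" using off_le[OF i] by simp
    then show ?thesis using True by (simp add: blk_def Uemb_nth)
  next
    case False then show ?thesis using t by (simp add: blk_def bsub_def)
  qed
qed

lemma blk_Uemb_other: "i < n \<Longrightarrow> j < n \<Longrightarrow> j \<noteq> i \<Longrightarrow> blk \<sigma> Nb j (Uemb \<sigma> Nb i t) = (\<lambda>_. 0)"
proof
  fix a assume ij: "i < n" "j < n" "j \<noteq> i"
  show "blk \<sigma> Nb j (Uemb \<sigma> Nb i t) a = 0"
  proof (cases "a < Nb j")
    case True
    then have "off Nb j + a < CARD('N)" using off_le[OF ij(2)] by simp
    then show ?thesis using True disjoint_blocks[of i j a] ij by (auto simp: blk_def Uemb_nth)
  qed (simp add: blk_def)
qed

lemma blk_add: "blk \<sigma> Nb i (x + y) = (\<lambda>j. blk \<sigma> Nb i x j + blk \<sigma> Nb i y j)"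
  by (auto simp: blk_def)
lemma blk_diff: "blk \<sigma> Nb i (x - y) = (\<lambda>j. blk \<sigma> Nb i x j - blk \<sigma> Nb i y j)"
  by (auto simp: blk_def)
lemma blk_scale: "blk \<sigma> Nb i (c *\<^sub>R x) = (\<lambda>j. c * blk \<sigma> Nb i x j)"
  by (auto simp: blk_def)
lemma blk_bsub: "blk \<sigma> Nb i x \<in> bsub Nb i"
  by (auto simp: blk_def bsub_def)
lemma Uemb_scale: "Uemb \<sigma> Nb i (\<lambda>j. c * t j) = c *\<^sub>R Uemb \<sigma> Nb i t"
  by (auto simp: Uemb_def vec_eq_iff Let_def)

lemma sum_UNIV_sigma: "(\<Sum>c\<in>UNIV. h c) = (\<Sum>p<CARD('N). h (\<sigma> p))"
  using sum.reindex_bij_betw[OF perm, of h] by simp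

lemma inner_blocks: "inner g d = (\<Sum>i<n. \<Sum>j<Nb i. blk \<sigma> Nb i g j * blk \<sigma> Nb i d j)"
proof -
  have "inner g d = (\<Sum>c\<in>UNIV. g $ c * d $ c)" by (simp add: inner_vec_def)
  also have "\<dots> = (\<Sum>p<off Nb n. g $ \<sigma> p * d $ \<sigma> p)" by (simp add: sum_UNIV_sigma off_n)
  also have "\<dots> = (\<Sum>i<n. \<Sum>j<Nb i. g $ \<sigma> (off Nb i + j) * d $ \<sigma> (off Nb i + j))"
    by (rule sum_blocks)
  also have "\<dots> = (\<Sum>i<n. \<Sum>j<Nb i. blk \<sigma> Nb i g j * blk \<sigma> Nb i d j)"
    by (intro sum.cong refl) (auto simp: blk_def)
  finally show ?thesis .
qed

lemma inner_Uemb: assumes i: "i < n"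
  shows "inner g (Uemb \<sigma> Nb i t) = (\<Sum>j<Nb i. blk \<sigma> Nb i g j * t j)"
proof -
  let ?o = "off Nb i"
  have "inner g (Uemb \<sigma> Nb i t) = (\<Sum>p<CARD('N). g $ \<sigma> p * Uemb \<sigma> Nb i t $ \<sigma> p)"
    by (simp add: inner_vec_def sum_UNIV_sigma)
  also have "\<dots> = (\<Sum>p<CARD('N). if p \<in> {?o..<?o + Nb i} then g $ \<sigma> p * t (p - ?o) else 0)"
    by (intro sum.cong refl) (auto simp: Uemb_nth)
  also have "\<dots> = (\<Sum>p\<in>{?o..<?o + Nb i}. g $ \<sigma> p * t (p - ?o))"
    using off_le[OF i] by (subst sum.If_cases) (auto intro!: sum.cong)
  also have "\<dots> = (\<Sum>j<Nb i. g $ \<sigma> (j + ?o) * t j)"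
    using sum.shift_bounds_nat_ivl[of "\<lambda>p. g $ \<sigma> p * t (p - ?o)" 0 ?o "Nb i"]
    by (simp add: add.commute lessThan_atLeast0)
  also have "\<dots> = (\<Sum>j<Nb i. blk \<sigma> Nb i g j * t j)"
    by (intro sum.cong refl) (auto simp: blk_def add.commute)
  finally show ?thesis .
qed

end


definition bil :: "(nat \<Rightarrow> nat \<Rightarrow> real) \<Rightarrow> nat \<Rightarrow> (nat \<Rightarrow> real) \<Rightarrow> (nat \<Rightarrow> real) \<Rightarrow> real" where
  "bil M m u t = (\<Sum>j<m. \<Sum>l<m. M j l * u l * t j)"

lemma qform_bil: "qform M m t = bil M m t t" by (simp add: qform_def bil_def)

lemma qform_nonneg: "pos_def_mat M m \<Longrightarrow> 0 \<le> qform M m t"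
proof -
  assume pd: "pos_def_mat M m"
  show ?thesis
  proof (cases "\<exists>j<m. t j \<noteq> 0")
    case True then show ?thesis using pd by (auto simp: pos_def_mat_def intro: less_imp_le)
  next
    case False then show ?thesis by (simp add: qform_def)
  qed
qed

lemma qform_scale: "qform M m (\<lambda>j. c * t j) = c\<^sup>2 * qform M m t"
  by (simp add: qform_def sum_distrib_left power2_eq_square algebra_simps)

lemma qform_uminus: "qform M m (\<lambda>j. - t j) = qform M m t"
  using qform_scale[of M m "-1" t] by simp

lemma bnorm_sq: "pos_def_mat (B i) (Nb i) \<Longrightarrow> (bnorm B Nb i t)\<^sup>2 = qform (B i) (Nb i) t"
  by (simp add: bnorm_def qform_nonneg)

lemma bnorm_scale: "bnorm B Nb i (\<lambda>j. c * t j) = \<bar>c\<bar> * bnorm B Nb i t"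
  by (simp add: bnorm_def qform_scale real_sqrt_mult)

lemma bnorm_uminus: "bnorm B Nb i (\<lambda>j. - t j) = bnorm B Nb i t"
  by (simp add: bnorm_def qform_uminus)

lemma bil_sym: "\<forall>j<m. \<forall>l<m. M j l = M l j \<Longrightarrow> bil M m u t = bil M m t u"
  unfolding bil_def
  by (subst sum.swap) (auto intro!: sum.cong simp: mult.commute mult.left_commute)

lemma qform_comb: assumes sym: "\<forall>j<m. \<forall>l<m. M j l = M l j"
  shows "qform M m (\<lambda>l. a * u l - t l) = a\<^sup>2 * qform M m u - 2 * a * bil M m u t + qform M m t"
proof -
  have "qform M m (\<lambda>l. a * u l - t l) = (\<Sum>j<m. \<Sum>l<m. a\<^sup>2 * (M j l * u l * u j) - a * (M j l * u l * t j) - a * (M j l * t l * u j) + M j l * t l * t j)"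
    unfolding qform_def by (intro sum.cong refl) (simp add: algebra_simps power2_eq_square)
  also have "\<dots> = a\<^sup>2 * bil M m u u - a * bil M m u t - a * bil M m t u + bil M m t t"
    by (simp add: bil_def sum.distrib sum_subtractf sum_distrib_left)
  finally have "qform M m (\<lambda>l. a * u l - t l) = a\<^sup>2 * bil M m u u - a * bil M m u t - a * bil M m t u + bil M m t t" .
  then show ?thesis using bil_sym[OF sym, of u t] by (simp add: qform_bil)
qed

lemma cs_bil: assumes pd: "pos_def_mat M m"
  shows "bil M m u t \<le> sqrt (qform M m u) * sqrt (qform M m t)"
proof -
  have sym: "\<forall>j<m. \<forall>l<m. M j l = M l j" using pd by (simp add: pos_def_mat_def)
  define A where "A = qform M m u"
  define C where "C = qform M m t"
  define b where "b = bil M m u t"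
  have A0: "0 \<le> A" and C0: "0 \<le> C" using qform_nonneg[OF pd] by (auto simp: A_def C_def)
  have key: "2 * a * b \<le> a\<^sup>2 * A + C" for a
    using qform_nonneg[OF pd, of "\<lambda>l. a * u l - t l"] qform_comb[OF sym, of a u t]
    by (simp add: A_def C_def b_def)
  show ?thesis
  proof (cases "A = 0")
    case True
    have "b \<le> 0"
    proof (rule ccontr)
      assume "\<not> b \<le> 0"
      then have "b > 0" by simp
      have "2 * ((C + 1) / b) * b = 2 * (C + 1)" using \<open>b > 0\<close> by simp
      then show False using key[of "(C+1)/b"] True C0 by simp
    qed
    moreover have "0 \<le> sqrt A * sqrt C" using A0 C0 by simp
    ultimately show ?thesis by (simp add: b_def A_def C_def)
  next
    case False
    then have Ap: "A > 0" using A0 by simp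
    show ?thesis
    proof (cases "C = 0")
      case True
      have "b \<le> 0"
      proof (rule ccontr)
        assume "\<not> b \<le> 0"
        then have "b > 0" by simp
        have "2 * (b / A) * b \<le> (b/A)\<^sup>2 * A" using key[of "b/A"] True by simp
        then show False using \<open>b > 0\<close> Ap by (simp add: field_simps power2_eq_square)
      qed
      moreover have "0 \<le> sqrt A * sqrt C" using A0 C0 by simp
    ultimately show ?thesis by (simp add: b_def A_def C_def)
    next
      case False
      then have Cp: "C > 0" using C0 by simp
      define a where "a = sqrt C / sqrt A"
      have "2 * a * b \<le> a\<^sup>2 * A + C" by (rule key)
      moreover have "a\<^sup>2 * A = C" using Ap Cp by (simp add: a_def power_divide)
      ultimately have "2 * a * b \<le> 2 * C" by simp
      then have "a * b \<le> C" by simp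
      then have "sqrt A * (a * b) \<le> sqrt A * C" using Ap by (simp add: mult_left_mono)
      moreover have "sqrt A * (a * b) = sqrt C * b" using Ap by (simp add: a_def)
      ultimately have "sqrt C * b \<le> sqrt A * C" by linarith
      moreover have cc: "sqrt C * sqrt C = C" using C0 by simp
      ultimately have "sqrt C * b \<le> sqrt C * (sqrt A * sqrt C)"
        by (metis mult.left_commute)
      then have "b \<le> sqrt A * sqrt C" using Cp by simp
      then show ?thesis by (simp add: A_def C_def b_def)
    qed
  qed
qed

lemma cs_dual: assumes pd: "pos_def_mat M m" and inv: "is_inv_mat M Mi m"
  shows "(\<Sum>j<m. d j * t j) \<le> sqrt (qform Mi m d) * sqrt (qform M m t)"
proof -
  define u where "u = (\<lambda>l. \<Sum>p<m. Mi l p * d p)"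
  have Mu: "(\<Sum>l<m. M j l * u l) = d j" if "j < m" for j
  proof -
    have "(\<Sum>l<m. M j l * u l) = (\<Sum>p<m. (\<Sum>l<m. M j l * Mi l p) * d p)"
      unfolding u_def by (simp add: sum_distrib_left sum_distrib_right mult.assoc) (rule sum.swap)
    also have "\<dots> = (\<Sum>p<m. (if j = p then 1 else 0) * d p)"
      using inv that by (simp add: is_inv_mat_def)
    also have "\<dots> = (\<Sum>p<m. if j = p then d p else 0)" by (intro sum.cong) auto
    also have "\<dots> = d j" using that by simp
    finally show ?thesis .
  qed
  have e1: "(\<Sum>j<m. d j * t j) = bil M m u t"
    unfolding bil_def by (intro sum.cong refl) (simp add: Mu[symmetric] sum_distrib_right)
  have e2: "qform Mi m d = qform M m u"
  proof -
    have "qform Mi m d = (\<Sum>j<m. d j * u j)"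
      unfolding qform_def u_def by (intro sum.cong refl) (simp add: sum_distrib_left mult_ac)
    also have "\<dots> = qform M m u"
      unfolding qform_def by (intro sum.cong refl) (simp add: Mu[symmetric] sum_distrib_right)
    finally show ?thesis .
  qed
  show ?thesis using cs_bil[OF pd, of u t] e1 e2 by simp
qed

lemma qform_dual_nonneg: assumes pd: "pos_def_mat M m" and inv: "is_inv_mat M Mi m"
  shows "0 \<le> qform Mi m d"
proof -
  define u where "u = (\<lambda>l. \<Sum>p<m. Mi l p * d p)"
  have Mu: "(\<Sum>l<m. M j l * u l) = d j" if "j < m" for j
  proof -
    have "(\<Sum>l<m. M j l * u l) = (\<Sum>p<m. (\<Sum>l<m. M j l * Mi l p) * d p)"
      unfolding u_def by (simp add: sum_distrib_left sum_distrib_right mult.assoc) (rule sum.swap)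
    also have "\<dots> = (\<Sum>p<m. (if j = p then 1 else 0) * d p)"
      using inv that by (simp add: is_inv_mat_def)
    also have "\<dots> = (\<Sum>p<m. if j = p then d p else 0)" by (intro sum.cong) auto
    also have "\<dots> = d j" using that by simp
    finally show ?thesis .
  qed
  have "qform Mi m d = (\<Sum>j<m. d j * u j)"
    unfolding qform_def u_def by (intro sum.cong refl) (simp add: sum_distrib_left mult_ac)
  also have "\<dots> = qform M m u"
    unfolding qform_def by (intro sum.cong refl) (simp add: Mu[symmetric] sum_distrib_right)
  finally show ?thesis using qform_nonneg[OF pd] by simp
qed



locale setting = blocks \<sigma> Nb n for \<sigma> :: "nat \<Rightarrow> 'N::finite" and Nb n +
  fixes f :: "real^'N \<Rightarrow> real" and gf :: "real^'N \<Rightarrow> real^'N"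
    and B Binv :: "nat \<Rightarrow> nat \<Rightarrow> nat \<Rightarrow> real" and L :: "nat \<Rightarrow> real"
    and \<Psi> :: "nat \<Rightarrow> (nat \<Rightarrow> real) \<Rightarrow> ereal"
  assumes Bpd: "\<forall>i<n. pos_def_mat (B i) (Nb i)"
    and Binv: "\<forall>i<n. is_inv_mat (B i) (Binv i) (Nb i)"
    and f_convex: "convex_on UNIV f"
    and f_grad: "\<forall>x. (f has_derivative (\<lambda>h. inner (gf x) h)) (at x)"
    and L_pos: "\<forall>i<n. 0 < L i"
    and lipschitz: "\<forall>x i t. i < n \<longrightarrow> t \<in> bsub Nb i \<longrightarrow>
          dnorm Binv Nb i (\<lambda>j. blk \<sigma> Nb i (gf (x + Uemb \<sigma> Nb i t)) j - blk \<sigma> Nb i (gf x) j)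
            \<le> L i * bnorm B Nb i t"
    and Psi: "\<forall>i<n. eproper_on (bsub Nb i) (\<Psi> i) \<and> eclosed_on (bsub Nb i) (\<Psi> i)
                    \<and> econvex_on (bsub Nb i) (\<Psi> i)"
begin

lemma line_deriv: "((\<lambda>s. f (x + s *\<^sub>R v)) has_real_derivative inner (gf (x + s *\<^sub>R v)) v) (at s)"
proof -
  have "((\<lambda>s. x + s *\<^sub>R v) has_derivative (\<lambda>h. h *\<^sub>R v)) (at s)"
    by (auto intro!: derivative_eq_intros)
  then have "((\<lambda>s. f (x + s *\<^sub>R v)) has_derivative (\<lambda>h. inner (gf (x + s *\<^sub>R v)) (h *\<^sub>R v))) (at s)"
    using has_derivative_compose f_grad by blast
  moreover have "(\<lambda>h. inner (gf (x + s *\<^sub>R v)) (h *\<^sub>R v)) = (*) (inner (gf (x + s *\<^sub>R v)) v)"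
    by (simp add: fun_eq_iff mult.commute)
  ultimately show ?thesis by (simp add: has_field_derivative_def)
qed

lemma grad_ineq: "f x + inner (gf x) (y - x) \<le> f y"
proof -
  define \<psi> where "\<psi> = (\<lambda>s::real. f (x + s *\<^sub>R (y - x)))"
  have cv: "convex_on UNIV \<psi>"
  proof (rule convex_onI)
    fix t a b :: real assume t: "0 < t" "t < 1"
    have "\<psi> ((1 - t) *\<^sub>R a + t *\<^sub>R b) = f ((1 - t) *\<^sub>R (x + a *\<^sub>R (y - x)) + t *\<^sub>R (x + b *\<^sub>R (y - x)))"
      unfolding \<psi>_def by (simp add: algebra_simps)
    also have "\<dots> \<le> (1 - t) * \<psi> a + t * \<psi> b"
      unfolding \<psi>_def using convex_onD[OF f_convex, of t] t by simp
    finally show "\<psi> ((1 - t) *\<^sub>R a + t *\<^sub>R b) \<le> (1 - t) * \<psi> a + t * \<psi> b" .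
  qed simp
  have d: "(\<psi> has_real_derivative inner (gf x) (y - x)) (at 0 within UNIV)"
    using line_deriv[of x "y - x" 0] by (simp add: \<psi>_def)
  have "inner (gf x) (y - x) * (1 - 0) \<le> \<psi> 1 - \<psi> 0"
    by (rule convex_on_imp_above_tangent[OF cv _ _ _ d]) auto
  then show ?thesis by (simp add: \<psi>_def)
qed

lemma cs_blk: "i < n \<Longrightarrow> (\<Sum>j<Nb i. d j * t j) \<le> dnorm Binv Nb i d * bnorm B Nb i t"
  using cs_dual[of "B i" "Nb i" "Binv i" d t] Bpd Binv by (simp add: dnorm_def bnorm_def)

lemma cs_blk_abs: "i < n \<Longrightarrow> \<bar>\<Sum>j<Nb i. d j * t j\<bar> \<le> dnorm Binv Nb i d * bnorm B Nb i t"
  using cs_blk[of i d t] cs_blk[of i d "\<lambda>j. - t j"] by (simp add: bnorm_uminus sum_negf)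

lemma descent:
  assumes i: "i < n" and t: "t \<in> bsub Nb i"
  shows "f (x + Uemb \<sigma> Nb i t) \<le> f x + (\<Sum>j<Nb i. blk \<sigma> Nb i (gf x) j * t j) + L i / 2 * (bnorm B Nb i t)\<^sup>2"
proof -
  define v where "v = Uemb \<sigma> Nb i t"
  define Q where "Q = (bnorm B Nb i t)\<^sup>2"
  define G0 where "G0 = inner (gf x) v"
  define \<phi> where "\<phi> = (\<lambda>s. f (x + s *\<^sub>R v) - s * G0 - L i / 2 * s\<^sup>2 * Q)"
  have "\<phi> 1 \<le> \<phi> 0"
  proof (rule DERIV_nonpos_imp_nonincreasing[of 0 1])
    fix s :: real assume s: "0 \<le> s" "s \<le> 1"
    have der: "(\<phi> has_real_derivative (inner (gf (x + s *\<^sub>R v)) v - G0 - L i * s * Q)) (at s)"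
      unfolding \<phi>_def by (auto intro!: derivative_eq_intros line_deriv simp: power2_eq_square)
    define w where "w = (\<lambda>j. s * t j)"
    have w: "w \<in> bsub Nb i" using t by (auto simp: bsub_def w_def)
    have xw: "x + s *\<^sub>R Uemb \<sigma> Nb i t = x + Uemb \<sigma> Nb i w" by (simp add: w_def Uemb_scale)
    have "inner (gf (x + s *\<^sub>R v)) v - G0 =
        (\<Sum>j<Nb i. (blk \<sigma> Nb i (gf (x + Uemb \<sigma> Nb i w)) j - blk \<sigma> Nb i (gf x) j) * t j)"
      unfolding G0_def v_def xw using i by (simp add: inner_Uemb sum_subtractf left_diff_distrib xw)
    also have "\<dots> \<le> dnorm Binv Nb i (\<lambda>j. blk \<sigma> Nb i (gf (x + Uemb \<sigma> Nb i w)) j - blk \<sigma> Nb i (gf x) j) * bnorm B Nb i t"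
      using cs_blk[OF i, of "\<lambda>j. blk \<sigma> Nb i (gf (x + Uemb \<sigma> Nb i w)) j - blk \<sigma> Nb i (gf x) j" t] by simp
    also have "\<dots> \<le> L i * bnorm B Nb i w * bnorm B Nb i t"
      using lipschitz i w Bpd by (intro mult_right_mono) (auto simp: bnorm_def qform_nonneg)
    also have "\<dots> = L i * s * Q"
      using s by (simp add: w_def bnorm_scale Q_def power2_eq_square)
    finally show "\<exists>y. (\<phi> has_real_derivative y) (at s) \<and> y \<le> 0" using der by auto
  qed simp
  then show ?thesis
    using i by (simp add: \<phi>_def v_def G0_def Q_def inner_Uemb)
qed

end


locale setting2 = setting \<sigma> Nb n f gf B Binv L \<Psi>
  for \<sigma> :: "nat \<Rightarrow> 'N::finite" and Nb n f gf B Binv L \<Psi> +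
  fixes xs :: "real^'N"
  assumes xs_min: "\<forall>x. Fobj f \<Psi> \<sigma> Nb n xs \<le> Fobj f \<Psi> \<sigma> Nb n x"
    and xs_fin: "Fobj f \<Psi> \<sigma> Nb n xs \<noteq> \<infinity>"
begin

abbreviation "Fo \<equiv> Fobj f \<Psi> \<sigma> Nb n"
definition "P i x = real_of_ereal (\<Psi> i (blk \<sigma> Nb i x))"
definition "rr i x = (\<Sum>j\<in>{..<n}-{i}. P j x)"
definition "ob i x = (\<lambda>t. ereal ((\<Sum>j<Nb i. blk \<sigma> Nb i (gf x) j * t j) + L i / 2 * (bnorm B Nb i t)\<^sup>2)
                     + \<Psi> i (\<lambda>j. blk \<sigma> Nb i x j + t j))"

lemma Tblk_ob: "Tblk gf L B \<Psi> \<sigma> Nb i x = (SOME t. t \<in> bsub Nb i \<and> (\<forall>s\<in>bsub Nb i. ob i x t \<le> ob i x s))"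
  by (simp add: Tblk_def ob_def Let_def)

lemma Psi_not_minf: "i < n \<Longrightarrow> t \<in> bsub Nb i \<Longrightarrow> \<Psi> i t \<noteq> -\<infinity>"
  using Psi by (auto simp: eproper_on_def)

lemma bsub_add: "s \<in> bsub Nb i \<Longrightarrow> t \<in> bsub Nb i \<Longrightarrow> (\<lambda>j. s j + t j) \<in> bsub Nb i"
  by (auto simp: bsub_def)

lemma fin: assumes "Fo x \<noteq> \<infinity>" "i < n" shows "\<Psi> i (blk \<sigma> Nb i x) = ereal (P i x)"
proof -
  have "(\<Sum>j<n. \<Psi> j (blk \<sigma> Nb j x)) \<noteq> \<infinity>" using assms(1) by (auto simp: Fobj_def)
  then have "\<Psi> i (blk \<sigma> Nb i x) \<noteq> \<infinity>" using assms(2) sum_Pinfty by blast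
  moreover have "\<Psi> i (blk \<sigma> Nb i x) \<noteq> -\<infinity>" using Psi_not_minf assms(2) blk_bsub by blast
  ultimately show ?thesis by (cases "\<Psi> i (blk \<sigma> Nb i x)") (auto simp: P_def)
qed

lemma Fo_real: assumes "Fo x \<noteq> \<infinity>" shows "Fo x = ereal (f x + (\<Sum>i<n. P i x))"
proof -
  have "(\<Sum>i<n. \<Psi> i (blk \<sigma> Nb i x)) = (\<Sum>i<n. ereal (P i x))"
    using fin[OF assms] by (intro sum.cong) auto
  then show ?thesis by (simp add: Fobj_def)
qed

definition "Fr x = f x + (\<Sum>i<n. P i x)"
definition "Fs = Fr xs"

lemma Fs_le: "Fo x \<noteq> \<infinity> \<Longrightarrow> Fs \<le> Fr x"
proof -
  assume x: "Fo x \<noteq> \<infinity>"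
  have "Fo xs \<le> Fo x" using xs_min by blast
  then show ?thesis using Fo_real[OF x] Fo_real[OF xs_fin] by (simp add: Fs_def Fr_def)
qed

lemma Fo_ge: "ereal Fs \<le> Fo x"
  using xs_min Fo_real[OF xs_fin] by (auto simp: Fs_def Fr_def)

lemma dec: assumes x: "Fo x \<noteq> \<infinity>" and i: "i < n" and s: "s \<in> bsub Nb i"
  shows "Fo (x + Uemb \<sigma> Nb i s) = ereal (f (x + Uemb \<sigma> Nb i s) + rr i x) + \<Psi> i (\<lambda>j. blk \<sigma> Nb i x j + s j)"
proof -
  let ?y = "x + Uemb \<sigma> Nb i s"
  have bi: "blk \<sigma> Nb i ?y = (\<lambda>j. blk \<sigma> Nb i x j + s j)"
    using blk_Uemb_same[OF i s] by (simp add: blk_add)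
  have bj: "blk \<sigma> Nb j ?y = blk \<sigma> Nb j x" if "j \<in> {..<n}-{i}" for j
    using blk_Uemb_other[of i j s] that i by (simp add: blk_add)
  have "(\<Sum>j<n. \<Psi> j (blk \<sigma> Nb j ?y)) = \<Psi> i (blk \<sigma> Nb i ?y) + (\<Sum>j\<in>{..<n}-{i}. \<Psi> j (blk \<sigma> Nb j ?y))"
    using i by (subst sum.remove[of _ i]) auto
  also have "(\<Sum>j\<in>{..<n}-{i}. \<Psi> j (blk \<sigma> Nb j ?y)) = (\<Sum>j\<in>{..<n}-{i}. ereal (P j x))"
    using bj fin[OF x] by (intro sum.cong) auto
  also have "\<dots> = ereal (rr i x)" by (simp add: rr_def)
  finally show ?thesis using bi
    by (cases "\<Psi> i (\<lambda>j. blk \<sigma> Nb i x j + s j)") (auto simp: Fobj_def)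
qed

lemma ob_lb: assumes x: "Fo x \<noteq> \<infinity>" and i: "i < n" and s: "s \<in> bsub Nb i"
  shows "ereal (Fs - f x - rr i x) \<le> ob i x s"
proof -
  have d: "f (x + Uemb \<sigma> Nb i s) \<le> f x + (\<Sum>j<Nb i. blk \<sigma> Nb i (gf x) j * s j) + L i / 2 * (bnorm B Nb i s)\<^sup>2"
    by (rule descent[OF i s])
  have "ereal Fs \<le> ereal (f (x + Uemb \<sigma> Nb i s) + rr i x) + \<Psi> i (\<lambda>j. blk \<sigma> Nb i x j + s j)"
    using Fo_ge dec[OF x i s] by metis
  then show ?thesis using d unfolding ob_def
    by (cases "\<Psi> i (\<lambda>j. blk \<sigma> Nb i x j + s j)") auto
qed

end


context setting2 begin

lemma bnorm_zero: "bnorm B Nb i (\<lambda>_. 0) = 0"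
  by (simp add: bnorm_def qform_def)

lemma ob_zero: "Fo x \<noteq> \<infinity> \<Longrightarrow> i < n \<Longrightarrow> ob i x (\<lambda>_. 0) = ereal (P i x)"
  using fin[of x i] by (simp add: ob_def bnorm_zero)

lemma coercive:
  assumes x: "Fo x \<noteq> \<infinity>" and i: "i < n" and s: "s \<in> bsub Nb i"
    and le: "ob i x s \<le> ereal (P i x + 1)"
  shows "bnorm B Nb i s \<le> max 1 ((2 * \<bar>2 * dnorm Binv Nb i (blk \<sigma> Nb i (gf x)) + L i / 2 + P i x - (Fs - f x - rr i x)\<bar> + 2) / L i)"
    (is "_ \<le> max 1 ((2 * \<bar>?A\<bar> + 2) / _)")
proof (cases "bnorm B Nb i s \<le> 1")
  case True then show ?thesis by simp
next
  case False
  define \<tau> where "\<tau> = bnorm B Nb i s"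
  define z where "z = blk \<sigma> Nb i x"
  define g where "g = blk \<sigma> Nb i (gf x)"
  define dg where "dg = dnorm Binv Nb i g"
  define K where "K = Fs - f x - rr i x"
  define Pz where "Pz = P i x"
  define Li where "Li = L i"
  have Li: "Li > 0" using L_pos i by (simp add: Li_def)
  have \<tau>1: "\<tau> > 1" using False by (simp add: \<tau>_def)
  have z: "z \<in> bsub Nb i" by (simp add: z_def blk_bsub)
  have Pz: "\<Psi> i z = ereal Pz" using fin[OF x i] by (simp add: z_def Pz_def)
  have zs: "(\<lambda>j. z j + s j) \<in> bsub Nb i" using bsub_add[OF z s] .
  have "\<Psi> i (\<lambda>j. z j + s j) \<noteq> \<infinity>" using le by (auto simp: ob_def z_def)
  moreover have "\<Psi> i (\<lambda>j. z j + s j) \<noteq> -\<infinity>" using Psi_not_minf[OF i zs] .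
  ultimately obtain q where q: "\<Psi> i (\<lambda>j. z j + s j) = ereal q" by (cases "\<Psi> i (\<lambda>j. z j + s j)") auto
  have obs: "(\<Sum>j<Nb i. g j * s j) + Li / 2 * \<tau>\<^sup>2 + q \<le> Pz + 1"
    using le q by (simp add: ob_def z_def g_def \<tau>_def Li_def Pz_def)
  define u where "u = 1 / \<tau>"
  have u: "0 < u" "u < 1" using \<tau>1 by (auto simp: u_def)
  define d where "d = (\<lambda>j. u * s j)"
  have d: "d \<in> bsub Nb i" using s by (auto simp: bsub_def d_def)
  have "bnorm B Nb i d = \<bar>u\<bar> * \<tau>" by (simp add: d_def bnorm_scale \<tau>_def)
  then have bd: "bnorm B Nb i d = 1" using u \<tau>1 by (simp add: u_def)
  have cvx: "econvex_on (bsub Nb i) (\<Psi> i)" using Psi i by blast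
  have "\<Psi> i (\<lambda>j. (1 - u) * z j + u * (z j + s j)) \<le> ereal (1 - u) * \<Psi> i z + ereal u * \<Psi> i (\<lambda>j. z j + s j)"
    using cvx[unfolded econvex_on_def, rule_format, OF z zs, of u] u by simp
  moreover have "(\<lambda>j. (1 - u) * z j + u * (z j + s j)) = (\<lambda>j. z j + d j)"
    by (auto simp: d_def algebra_simps)
  ultimately have Pd: "\<Psi> i (\<lambda>j. z j + d j) \<le> ereal ((1 - u) * Pz + u * q)"
    using Pz q by simp
  have "ereal K \<le> ob i x d" using ob_lb[OF x i d] by (simp add: K_def)
  also have "\<dots> \<le> ereal ((\<Sum>j<Nb i. g j * d j) + Li / 2 + ((1 - u) * Pz + u * q))"
    using Pd bd unfolding ob_def z_def g_def Li_def
    by (cases "\<Psi> i (\<lambda>j. blk \<sigma> Nb i x j + d j)") auto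
  finally have K1: "K \<le> (\<Sum>j<Nb i. g j * d j) + Li / 2 + ((1 - u) * Pz + u * q)" by simp
  have "(\<Sum>j<Nb i. g j * d j) \<le> dg" using cs_blk[OF i, of g d] bd by (simp add: dg_def)
  with K1 have K2: "K \<le> dg + Li / 2 + (1 - u) * Pz + u * q" by simp
  have "\<tau> * K \<le> \<tau> * (dg + Li / 2 + (1 - u) * Pz + u * q)"
    using K2 \<tau>1 by (intro mult_left_mono) auto
  also have "\<dots> = \<tau> * dg + \<tau> * Li / 2 + (\<tau> - 1) * Pz + q"
    using \<tau>1 by (simp add: u_def field_simps)
  finally have K3: "\<tau> * K \<le> \<tau> * dg + \<tau> * Li / 2 + (\<tau> - 1) * Pz + q" .
  have "- (dg * \<tau>) \<le> (\<Sum>j<Nb i. g j * s j)"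
    using cs_blk_abs[OF i, of g s] by (simp add: dg_def \<tau>_def)
  with obs K3 have main: "Li / 2 * \<tau>\<^sup>2 \<le> 1 + ?A * \<tau>"
    by (simp add: K_def dg_def g_def Pz_def Li_def algebra_simps)
  have "?A * \<tau> \<le> \<bar>?A\<bar> * \<tau>" using \<tau>1 by (intro mult_right_mono) auto
  with main \<tau>1 have "Li / 2 * \<tau>\<^sup>2 \<le> (1 + \<bar>?A\<bar>) * \<tau>" by (simp add: algebra_simps)
  then have "Li / 2 * \<tau> * \<tau> \<le> (1 + \<bar>?A\<bar>) * \<tau>" by (simp add: power2_eq_square mult.assoc)
  then have "Li / 2 * \<tau> \<le> 1 + \<bar>?A\<bar>" using \<tau>1 by simp
  then have "\<tau> \<le> (2 * \<bar>?A\<bar> + 2) / Li" using Li by (simp add: field_simps)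
  then show ?thesis by (simp add: \<tau>_def Li_def)
qed

lemma coord_bound:
  assumes i: "i < n" and s: "s \<in> bsub Nb i" and R: "bnorm B Nb i s \<le> R"
  shows "\<bar>s j\<bar> \<le> (\<Sum>l<Nb i. dnorm Binv Nb i (\<lambda>p. if p = l then 1 else 0) * R)"
proof -
  have nn: "0 \<le> dnorm Binv Nb i e" for e
    using qform_dual_nonneg[of "B i" "Nb i" "Binv i" e, OF Bpd[rule_format, OF i] Binv[rule_format, OF i]]
    by (simp add: dnorm_def)
  have "0 \<le> bnorm B Nb i s" using qform_nonneg[OF Bpd[rule_format, OF i]] by (simp add: bnorm_def)
  then have R0: "0 \<le> R" using R by linarith
  show ?thesis
  proof (cases "j < Nb i")
    case True
    define e where "e = (\<lambda>p. if p = j then 1 else (0::real))"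
    have "(\<Sum>l<Nb i. e l * s l) = (\<Sum>l<Nb i. if j = l then s l else 0)" by (intro sum.cong) (auto simp: e_def)
    then have "(\<Sum>l<Nb i. e l * s l) = s j" using True by simp
    then have "\<bar>s j\<bar> \<le> dnorm Binv Nb i e * bnorm B Nb i s" using cs_blk_abs[OF i, of e s] by simp
    also have "\<dots> \<le> dnorm Binv Nb i e * R" using R nn by (intro mult_left_mono) auto
    also have "\<dots> \<le> (\<Sum>l<Nb i. dnorm Binv Nb i (\<lambda>p. if p = l then 1 else 0) * R)"
      using True nn R0 unfolding e_def
      by (intro member_le_sum[where f="\<lambda>l. dnorm Binv Nb i (\<lambda>p. if p = l then 1 else 0) * R"]) auto
    finally show ?thesis .
  next
    case False
    then show ?thesis using s nn R0 by (auto simp: bsub_def intro!: sum_nonneg)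
  qed
qed

end


context setting2 begin

lemma exists_min:
  assumes x: "Fo x \<noteq> \<infinity>" and i: "i < n"
  shows "\<exists>t. t \<in> bsub Nb i \<and> (\<forall>s\<in>bsub Nb i. ob i x t \<le> ob i x s)"
proof -
  define z where "z = blk \<sigma> Nb i x"
  define g where "g = blk \<sigma> Nb i (gf x)"
  define m where "m = Nb i"
  define \<phi> where "\<phi> = (\<lambda>t. (\<Sum>j<m. g j * t j) + L i / 2 * qform (B i) m t)"
  have pd: "pos_def_mat (B i) (Nb i)" using Bpd i by blast
  have ob_eq: "ob i x t = ereal (\<phi> t) + \<Psi> i (\<lambda>j. z j + t j)" for t
    by (simp add: ob_def \<phi>_def z_def g_def m_def bnorm_sq[of B i Nb, OF pd])
  define K where "K = Fs - f x - rr i x"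
  obtain R where R: "\<And>s. s \<in> bsub Nb i \<Longrightarrow> ob i x s \<le> ereal (P i x + 1) \<Longrightarrow> bnorm B Nb i s \<le> R"
    using coercive[OF x i] by blast
  define M where "M = (\<Sum>l<Nb i. dnorm Binv Nb i (\<lambda>p. if p = l then 1 else 0) * R)"
  have z0: "(\<lambda>_. 0) \<in> bsub Nb i" by (simp add: bsub_def)
  define v where "v = (INF s\<in>bsub Nb i. ob i x s)"
  have vK: "ereal K \<le> v" unfolding v_def K_def using ob_lb[OF x i] by (auto intro: INF_greatest)
  have vP: "v \<le> ereal (P i x)" unfolding v_def using ob_zero[OF x i] z0 by (metis INF_lower)
  obtain v' where v': "v = ereal v'" using vK vP by (cases v) auto
  have v'P: "v' \<le> P i x" using vP v' by simp
  have "\<forall>k. \<exists>s. s \<in> bsub Nb i \<and> ob i x s < ereal (v' + inverse (real (Suc k)))"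
  proof
    fix k
    have "v < ereal (v' + inverse (real (Suc k)))" using v' by simp
    then show "\<exists>s. s \<in> bsub Nb i \<and> ob i x s < ereal (v' + inverse (real (Suc k)))"
      unfolding v_def by (auto simp: INF_less_iff)
  qed
  then obtain ts where ts: "\<And>k. ts k \<in> bsub Nb i" "\<And>k. ob i x (ts k) < ereal (v' + inverse (real (Suc k)))"
    by metis
  have tsle: "ob i x (ts k) \<le> ereal (P i x + 1)" for k
  proof -
    have "inverse (real (Suc k)) \<le> 1" by (simp add: inverse_le_1_iff)
    then have "ereal (v' + inverse (real (Suc k))) \<le> ereal (P i x + 1)" using v'P by simp
    then show ?thesis using order.trans[OF less_imp_le[OF ts(2)[of k]]] by blast
  qed
  have tsb: "\<bar>ts k j\<bar> \<le> M" for k j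
    unfolding M_def by (rule coord_bound[OF i ts(1) R[OF ts(1) tsle]])
  define V where "V = (\<lambda>k. Uemb \<sigma> Nb i (ts k))"
  have M0: "0 \<le> M" using tsb[of 0 0] by linarith
  have Vc: "\<bar>V k $ c\<bar> \<le> M" for k c
    using tsb M0 by (auto simp: V_def Uemb_def Let_def)
  have "norm (V k) \<le> real CARD('N) * M" for k
  proof -
    have "norm (V k) \<le> (\<Sum>c\<in>UNIV. \<bar>V k $ c\<bar>)" by (rule norm_le_l1_cart)
    also have "\<dots> \<le> (\<Sum>c\<in>(UNIV::'N set). M)" by (intro sum_mono Vc)
    finally show ?thesis by simp
  qed
  then have "bounded (range V)" unfolding bounded_iff by blast
  then obtain l r where r: "strict_mono r" and lim: "(V \<circ> r) \<longlonglongrightarrow> l"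
    using bounded_imp_convergent_subsequence by blast
  define tstar where "tstar = blk \<sigma> Nb i l"
  have tstar: "tstar \<in> bsub Nb i" by (simp add: tstar_def blk_bsub)
  have tsV: "ts k = blk \<sigma> Nb i (V k)" for k using blk_Uemb_same[OF i ts(1)] by (simp add: V_def)
  have coord: "((\<lambda>k. blk \<sigma> Nb i (V (r k)) j) \<longlonglongrightarrow> blk \<sigma> Nb i l j)" for j
  proof (cases "j < Nb i")
    case True
    have "((\<lambda>k. (V \<circ> r) k $ \<sigma> (off Nb i + j)) \<longlonglongrightarrow> l $ \<sigma> (off Nb i + j))"
      by (intro tendsto_vec_nth lim)
    then show ?thesis using True by (simp add: blk_def)
  qed (simp add: blk_def)
  have phil: "((\<lambda>k. \<phi> (ts (r k))) \<longlonglongrightarrow> \<phi> tstar)"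
    unfolding \<phi>_def tsV tstar_def qform_def by (intro tendsto_intros coord)
  define a where "a = (\<lambda>k. v' + inverse (real (Suc (r k))) - \<phi> (ts (r k)))"
  have inv0: "((\<lambda>k. inverse (real (Suc (r k)))) \<longlonglongrightarrow> 0)"
    using LIMSEQ_subseq_LIMSEQ[OF LIMSEQ_inverse_real_of_nat r] by (simp add: o_def)
  have alim: "a \<longlonglongrightarrow> v' + 0 - \<phi> tstar"
    unfolding a_def by (intro tendsto_intros inv0 phil)
  define H where "H = (\<lambda>y::real^'N. (\<lambda>j. z j + blk \<sigma> Nb i y j))"
  have Hc: "continuous_on UNIV H"
    unfolding H_def
  proof (intro continuous_on_coordinatewise_then_product)
    fix j
    show "continuous_on UNIV (\<lambda>y::real^'N. z j + blk \<sigma> Nb i y j)"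
      by (cases "j < Nb i") (auto simp: blk_def intro!: continuous_intros)
  qed
  have Hlim: "((\<lambda>k. H (V (r k))) \<longlonglongrightarrow> H l)"
    using continuous_on_tendsto_compose[OF Hc lim[unfolded o_def]] by simp
  have Hts: "H (V k) = (\<lambda>j. z j + ts k j)" for k by (simp add: H_def tsV)
  have Hl: "H l = (\<lambda>j. z j + tstar j)" by (simp add: H_def tstar_def)
  define Ep where "Ep = {(y, a::real). y \<in> bsub Nb i \<and> \<Psi> i y \<le> ereal a}"
  have Epc: "closed Ep" using Psi i by (simp add: eclosed_on_def Ep_def)
  have zb: "z \<in> bsub Nb i" by (simp add: z_def blk_bsub)
  have inEp: "(H (V (r k)), a k) \<in> Ep" for k
  proof -
    have lt: "ereal (\<phi> (ts (r k))) + \<Psi> i (\<lambda>j. z j + ts (r k) j) < ereal (v' + inverse (real (Suc (r k))))"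
      using ts(2)[of "r k"] ob_eq by simp
    have "\<Psi> i (\<lambda>j. z j + ts (r k) j) \<le> ereal (a k)"
      using lt unfolding a_def by (cases "\<Psi> i (\<lambda>j. z j + ts (r k) j)") auto
    then show ?thesis using bsub_add[OF zb ts(1)[of "r k"]] by (simp add: Ep_def Hts)
  qed
  have "((\<lambda>k. (H (V (r k)), a k)) \<longlonglongrightarrow> (H l, v' + 0 - \<phi> tstar))"
    by (intro tendsto_Pair Hlim alim)
  then have "(H l, v' + 0 - \<phi> tstar) \<in> Ep"
    by (rule closed_sequentially[OF Epc, of "\<lambda>k. (H (V (r k)), a k)", OF inEp])
  then have "\<Psi> i (\<lambda>j. z j + tstar j) \<le> ereal (v' - \<phi> tstar)" by (simp add: Ep_def Hl)
  then have "ob i x tstar \<le> v" unfolding ob_eq v'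
    by (cases "\<Psi> i (\<lambda>j. z j + tstar j)") auto
  then have "\<forall>s\<in>bsub Nb i. ob i x tstar \<le> ob i x s"
    unfolding v_def by (auto intro: order_trans INF_lower)
  then show ?thesis using tstar by blast
qed

end


context setting2 begin

definition "nxtp i x = x + Uemb \<sigma> Nb i (Tblk gf L B \<Psi> \<sigma> Nb i x)"

lemma Tblk_min: assumes x: "Fo x \<noteq> \<infinity>" and i: "i < n"
  shows "Tblk gf L B \<Psi> \<sigma> Nb i x \<in> bsub Nb i"
    "\<And>s. s \<in> bsub Nb i \<Longrightarrow> ob i x (Tblk gf L B \<Psi> \<sigma> Nb i x) \<le> ob i x s"
  using someI_ex[OF exists_min[OF x i]] unfolding Tblk_ob[symmetric] by auto

lemma ob_not_minf: "i < n \<Longrightarrow> t \<in> bsub Nb i \<Longrightarrow> ob i x t \<noteq> -\<infinity>"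
  using Psi_not_minf[of i "\<lambda>j. blk \<sigma> Nb i x j + t j"] bsub_add[OF blk_bsub, of t i x]
  by (auto simp: ob_def)

definition "ovl i x = real_of_ereal (ob i x (Tblk gf L B \<Psi> \<sigma> Nb i x))"

lemma ovl_props: assumes x: "Fo x \<noteq> \<infinity>" and i: "i < n"
  shows "ob i x (Tblk gf L B \<Psi> \<sigma> Nb i x) = ereal (ovl i x)"
    and "Fo (nxtp i x) \<le> ereal (f x + ovl i x + rr i x)"
proof -
  let ?T = "Tblk gf L B \<Psi> \<sigma> Nb i x"
  have T: "?T \<in> bsub Nb i" using Tblk_min[OF x i] by simp
  have "ob i x ?T \<le> ereal (P i x)"
    using Tblk_min(2)[OF x i, of "\<lambda>_. 0"] ob_zero[OF x i] by (simp add: bsub_def)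
  moreover have "ob i x ?T \<noteq> -\<infinity>" using ob_not_minf[OF i T] .
  ultimately show e: "ob i x ?T = ereal (ovl i x)" unfolding ovl_def by (cases "ob i x ?T") auto
  have d: "f (x + Uemb \<sigma> Nb i ?T) \<le> f x + (\<Sum>j<Nb i. blk \<sigma> Nb i (gf x) j * ?T j) + L i / 2 * (bnorm B Nb i ?T)\<^sup>2"
    by (rule descent[OF i T])
  show "Fo (nxtp i x) \<le> ereal (f x + ovl i x + rr i x)"
    unfolding nxtp_def dec[OF x i T] using e d unfolding ob_def
    by (cases "\<Psi> i (\<lambda>j. blk \<sigma> Nb i x j + ?T j)") auto
qed

lemma nxtp_fin: "Fo x \<noteq> \<infinity> \<Longrightarrow> i < n \<Longrightarrow> Fo (nxtp i x) \<noteq> \<infinity>"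
  using ovl_props(2)[of x i] by auto

lemma Fr_nxt: "Fo x \<noteq> \<infinity> \<Longrightarrow> i < n \<Longrightarrow> Fr (nxtp i x) \<le> f x + ovl i x + rr i x"
  using ovl_props(2)[of x i] Fo_real[OF nxtp_fin[of x i]] by (simp add: Fr_def)

lemma ovl_le: assumes x: "Fo x \<noteq> \<infinity>" and i: "i < n" and s: "s \<in> bsub Nb i"
    and w: "ob i x s = ereal w"
  shows "ovl i x \<le> w"
  using Tblk_min(2)[OF x i s] ovl_props(1)[OF x i] w by simp

lemma Fr_nxt_le: "Fo x \<noteq> \<infinity> \<Longrightarrow> i < n \<Longrightarrow> Fr (nxtp i x) \<le> Fr x"
proof -
  assume x: "Fo x \<noteq> \<infinity>" and i: "i < n"
  have "ovl i x \<le> P i x" using ovl_le[OF x i _ ob_zero[OF x i]] by (simp add: bsub_def)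
  moreover have "rr i x = (\<Sum>j<n. P j x) - P i x"
    unfolding rr_def using i by (simp add: sum_diff1)
  ultimately show ?thesis using Fr_nxt[OF x i] by (simp add: Fr_def)
qed

lemma Lsq_scale: "Lnorm_sq L B \<sigma> Nb n (c *\<^sub>R v) = c\<^sup>2 * Lnorm_sq L B \<sigma> Nb n v"
  by (simp add: Lnorm_sq_def blk_scale bnorm_scale power_mult_distrib sum_distrib_left mult_ac)

lemma Lsq_sym: "Lnorm_sq L B \<sigma> Nb n (xs - x) = Lnorm_sq L B \<sigma> Nb n (x - xs)"
  using Lsq_scale[of "-1" "x - xs"] by simp

lemma conv_comb:
  assumes x: "Fo x \<noteq> \<infinity>" and a: "0 \<le> \<alpha>" "\<alpha> \<le> 1"
  shows "Fo (x + \<alpha> *\<^sub>R (xs - x)) \<le> ereal ((1 - \<alpha>) * Fr x + \<alpha> * Fs)"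
proof -
  let ?y = "x + \<alpha> *\<^sub>R (xs - x)"
  have y: "?y = (1 - \<alpha>) *\<^sub>R x + \<alpha> *\<^sub>R xs" by (simp add: algebra_simps)
  have fy: "f ?y \<le> (1 - \<alpha>) * f x + \<alpha> * f xs"
    unfolding y using convex_onD[OF f_convex, of \<alpha> x xs] a by simp
  have py: "\<Psi> i (blk \<sigma> Nb i ?y) \<le> ereal ((1 - \<alpha>) * P i x + \<alpha> * P i xs)" if i: "i < n" for i
  proof -
    have bY: "blk \<sigma> Nb i ?y = (\<lambda>j. (1 - \<alpha>) * blk \<sigma> Nb i x j + \<alpha> * blk \<sigma> Nb i xs j)"
      unfolding y by (simp add: blk_add blk_scale)
    show ?thesis
    proof (cases "\<alpha> = 0 \<or> \<alpha> = 1")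
      case True
      then show ?thesis using fin[OF x i] fin[OF xs_fin i] by (auto simp: bY)
    next
      case False
      then have a': "0 < \<alpha>" "\<alpha> < 1" using a by auto
      have cvx: "econvex_on (bsub Nb i) (\<Psi> i)" using Psi i by blast
      have "\<Psi> i (blk \<sigma> Nb i ?y) \<le> ereal (1 - \<alpha>) * \<Psi> i (blk \<sigma> Nb i x) + ereal \<alpha> * \<Psi> i (blk \<sigma> Nb i xs)"
        unfolding bY using cvx[unfolded econvex_on_def, rule_format, OF blk_bsub blk_bsub, of \<alpha>] a' by simp
      then show ?thesis using fin[OF x i] fin[OF xs_fin i] by simp
    qed
  qed
  have "(\<Sum>i<n. \<Psi> i (blk \<sigma> Nb i ?y)) \<le> (\<Sum>i<n. ereal ((1 - \<alpha>) * P i x + \<alpha> * P i xs))"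
    by (intro sum_mono py) simp
  then have "Fo ?y \<le> ereal (f ?y) + ereal (\<Sum>i<n. (1 - \<alpha>) * P i x + \<alpha> * P i xs)"
    unfolding Fobj_def sum_ereal[symmetric] by (rule add_left_mono)
  also have "\<dots> \<le> ereal ((1 - \<alpha>) * Fr x + \<alpha> * Fs)"
  proof -
    have "(\<Sum>i<n. (1 - \<alpha>) * P i x + \<alpha> * P i xs) = (1 - \<alpha>) * (\<Sum>i<n. P i x) + \<alpha> * (\<Sum>i<n. P i xs)"
      by (simp add: sum.distrib sum_distrib_left)
    then show ?thesis using fy by (simp add: Fr_def Fs_def algebra_simps)
  qed
  finally show ?thesis .
qed

end


context setting2 begin

lemma step_sum:
  assumes x: "Fo x \<noteq> \<infinity>"
    and sc: "\<forall>x y g. Fo x \<noteq> \<infinity> \<longrightarrow> Fo y \<noteq> \<infinity> \<longrightarrow> subgrad Fo y g \<longrightarrow>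
          Fo y + ereal (inner g (x - y)) + ereal (\<mu> / 2 * Lnorm_sq L B \<sigma> Nb n (x - y)) \<le> Fo x"
    and mu: "0 < \<mu>"
  shows "(\<Sum>i<n. Fr (nxtp i x) - Fs) \<le> (real n - (1 - gamma_mu \<mu>)) * (Fr x - Fs)"
proof -
  define D where "D = Fr x - Fs"
  define Lq where "Lq = Lnorm_sq L B \<sigma> Nb n (x - xs)"
  have sg: "subgrad Fo xs 0" using xs_min by (simp add: subgrad_def zero_ereal_def[symmetric])
  have "Fo xs + ereal (inner 0 (x - xs)) + ereal (\<mu> / 2 * Lq) \<le> Fo x"
    using sc[rule_format, OF x xs_fin sg] by (simp add: Lq_def)
  then have LqD: "\<mu> / 2 * Lq \<le> D"
    using Fo_real[OF x] Fo_real[OF xs_fin] by (simp add: D_def Fr_def Fs_def)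
  define \<alpha> where "\<alpha> = min 1 (\<mu> / 2)"
  have a: "0 \<le> \<alpha>" "\<alpha> \<le> 1" using mu by (auto simp: \<alpha>_def)
  have agam: "\<alpha> - \<alpha>\<^sup>2 / \<mu> = 1 - gamma_mu \<mu>"
    using mu by (auto simp: \<alpha>_def gamma_mu_def power2_eq_square field_simps)
  define y where "y = x + \<alpha> *\<^sub>R (xs - x)"
  have Fy: "Fo y \<le> ereal ((1 - \<alpha>) * Fr x + \<alpha> * Fs)" unfolding y_def by (rule conv_comb[OF x a])
  then have y: "Fo y \<noteq> \<infinity>" by auto
  have Fry: "Fr y \<le> (1 - \<alpha>) * Fr x + \<alpha> * Fs" using Fy Fo_real[OF y] by (simp add: Fr_def)
  define s where "s = (\<lambda>i. blk \<sigma> Nb i (y - x))"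
  have sb: "s i \<in> bsub Nb i" for i by (simp add: s_def blk_bsub)
  have ovl_i: "ovl i x \<le> (\<Sum>j<Nb i. blk \<sigma> Nb i (gf x) j * s i j) + L i / 2 * (bnorm B Nb i (s i))\<^sup>2 + P i y"
    if i: "i < n" for i
  proof -
    have "(\<lambda>j. blk \<sigma> Nb i x j + s i j) = blk \<sigma> Nb i y"
      by (auto simp: s_def blk_diff)
    then have "ob i x (s i) = ereal ((\<Sum>j<Nb i. blk \<sigma> Nb i (gf x) j * s i j) + L i / 2 * (bnorm B Nb i (s i))\<^sup>2 + P i y)"
      using fin[OF y i] by (simp add: ob_def)
    then show ?thesis by (rule ovl_le[OF x i sb])
  qed
  have sum1: "(\<Sum>i<n. \<Sum>j<Nb i. blk \<sigma> Nb i (gf x) j * s i j) = inner (gf x) (y - x)"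
    by (simp add: s_def inner_blocks)
  have sum2: "(\<Sum>i<n. L i / 2 * (bnorm B Nb i (s i))\<^sup>2) = Lnorm_sq L B \<sigma> Nb n (y - x) / 2"
    by (simp add: s_def Lnorm_sq_def sum_divide_distrib)
  have Lyx: "Lnorm_sq L B \<sigma> Nb n (y - x) = \<alpha>\<^sup>2 * Lq"
    using Lsq_scale[of \<alpha> "xs - x"] Lsq_sym[of x] by (simp add: y_def Lq_def)
  have "(\<Sum>i<n. ovl i x) \<le> (\<Sum>i<n. (\<Sum>j<Nb i. blk \<sigma> Nb i (gf x) j * s i j) + L i / 2 * (bnorm B Nb i (s i))\<^sup>2 + P i y)"
    by (intro sum_mono ovl_i) simp
  also have "\<dots> = inner (gf x) (y - x) + \<alpha>\<^sup>2 * Lq / 2 + (\<Sum>i<n. P i y)"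
    by (simp only: sum.distrib sum1 sum2 Lyx)
  finally have So: "(\<Sum>i<n. ovl i x) \<le> inner (gf x) (y - x) + \<alpha>\<^sup>2 * Lq / 2 + (\<Sum>i<n. P i y)" .
  have rrsum: "(\<Sum>i<n. rr i x) = real n * (\<Sum>j<n. P j x) - (\<Sum>j<n. P j x)"
  proof -
    have "(\<Sum>i<n. rr i x) = (\<Sum>i<n. (\<Sum>j<n. P j x) - P i x)"
      unfolding rr_def by (intro sum.cong refl) (simp add: sum_diff1)
    then show ?thesis by (simp add: sum_subtractf)
  qed
  have "(\<Sum>i<n. Fr (nxtp i x)) \<le> (\<Sum>i<n. f x + ovl i x + rr i x)"
    by (intro sum_mono Fr_nxt[OF x]) simp
  also have "\<dots> = real n * f x + (\<Sum>i<n. ovl i x) + (\<Sum>i<n. rr i x)"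
    by (simp add: sum.distrib)
  finally have S1: "(\<Sum>i<n. Fr (nxtp i x)) \<le> real n * f x + (\<Sum>i<n. ovl i x) + (\<Sum>i<n. rr i x)" .
  have gi: "f x + inner (gf x) (y - x) \<le> f y" by (rule grad_ineq)
  have S2: "(\<Sum>i<n. Fr (nxtp i x)) \<le> real n * Fr x + Fr y - Fr x + \<alpha>\<^sup>2 * Lq / 2"
    using S1 So rrsum gi by (simp add: Fr_def algebra_simps)
  have "\<alpha>\<^sup>2 * Lq / 2 \<le> \<alpha>\<^sup>2 / \<mu> * D"
  proof -
    have "\<alpha>\<^sup>2 * (\<mu> / 2 * Lq) \<le> \<alpha>\<^sup>2 * D" using LqD by (intro mult_left_mono) auto
    then show ?thesis using mu by (simp add: field_simps)
  qed
  with S2 Fry have "(\<Sum>i<n. Fr (nxtp i x)) \<le> real n * Fr x - (\<alpha> - \<alpha>\<^sup>2 / \<mu>) * D"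
    by (simp add: D_def algebra_simps)
  then have "(\<Sum>i<n. Fr (nxtp i x)) - real n * Fs \<le> (real n - (1 - gamma_mu \<mu>)) * D"
    unfolding agam by (simp add: D_def algebra_simps)
  then show ?thesis by (simp add: sum_subtractf D_def)
qed

end


context setting2 begin

abbreviation "U x0 js \<equiv> ucdc gf L B \<Psi> \<sigma> Nb x0 js"

lemma ucdc_snoc: "U x0 (js @ [i]) = nxtp i (U x0 js)"
  by (simp add: ucdc_def nxtp_def)

lemma ucdc_fin: "Fo x0 \<noteq> \<infinity> \<Longrightarrow> set js \<subseteq> {..<n} \<Longrightarrow> Fo (U x0 js) \<noteq> \<infinity>"
proof (induction js rule: rev_induct)
  case Nil then show ?case by (simp add: ucdc_def)
next
  case (snoc i js) then show ?case by (simp add: ucdc_snoc nxtp_fin)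
qed

lemma index_seqs_Suc: "index_seqs n (Suc k) = (\<lambda>(js, i). js @ [i]) ` (index_seqs n k \<times> {..<n})"
proof
  show "index_seqs n (Suc k) \<subseteq> (\<lambda>(js, i). js @ [i]) ` (index_seqs n k \<times> {..<n})"
  proof
    fix ks assume ks: "ks \<in> index_seqs n (Suc k)"
    then have "ks \<noteq> []" by (auto simp: index_seqs_def)
    then obtain js i where e: "ks = js @ [i]" by (metis rev_exhaust)
    have "(js, i) \<in> index_seqs n k \<times> {..<n}" using ks e by (auto simp: index_seqs_def)
    then show "ks \<in> (\<lambda>(js, i). js @ [i]) ` (index_seqs n k \<times> {..<n})"
      using e by force
  qed
qed (auto simp: index_seqs_def)

lemma inj_snoc: "inj_on (\<lambda>(js, i). js @ [i]) X"
  by (auto simp: inj_on_def)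

lemma finite_index_seqs: "finite (index_seqs n k)"
proof -
  have "index_seqs n k = {xs. set xs \<subseteq> {..<n} \<and> length xs = k}" by (auto simp: index_seqs_def)
  then show ?thesis using finite_lists_length_eq[of "{..<n}" k] by simp
qed

lemma card_index_seqs: "card (index_seqs n k) = n ^ k"
proof -
  have "index_seqs n k = {xs. set xs \<subseteq> {..<n} \<and> length xs = k}" by (auto simp: index_seqs_def)
  then show ?thesis using card_lists_length_eq[of "{..<n}" k] by simp
qed

lemma iter_sum:
  assumes x0: "Fo x0 \<noteq> \<infinity>"
    and sc: "\<forall>x y g. Fo x \<noteq> \<infinity> \<longrightarrow> Fo y \<noteq> \<infinity> \<longrightarrow> subgrad Fo y g \<longrightarrow>
          Fo y + ereal (inner g (x - y)) + ereal (\<mu> / 2 * Lnorm_sq L B \<sigma> Nb n (x - y)) \<le> Fo x"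
    and mu: "0 < \<mu>" and q0: "0 \<le> real n - (1 - gamma_mu \<mu>)"
  shows "(\<Sum>js\<in>index_seqs n k. Fr (U x0 js) - Fs) \<le> (real n - (1 - gamma_mu \<mu>)) ^ k * (Fr x0 - Fs)"
proof (induction k)
  case 0
  have "index_seqs n 0 = {[]}" by (auto simp: index_seqs_def)
  then show ?case by (simp add: ucdc_def)
next
  case (Suc k)
  let ?q = "real n - (1 - gamma_mu \<mu>)"
  have "(\<Sum>js\<in>index_seqs n (Suc k). Fr (U x0 js) - Fs)
      = (\<Sum>p\<in>index_seqs n k \<times> {..<n}. Fr (U x0 ((\<lambda>(js, i). js @ [i]) p)) - Fs)"
    unfolding index_seqs_Suc by (simp add: sum.reindex[OF inj_snoc] o_def)
  also have "\<dots> = (\<Sum>js\<in>index_seqs n k. \<Sum>i<n. Fr (nxtp i (U x0 js)) - Fs)"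
    by (simp add: sum.cartesian_product' ucdc_snoc)
  also have "\<dots> \<le> (\<Sum>js\<in>index_seqs n k. ?q * (Fr (U x0 js) - Fs))"
  proof (intro sum_mono)
    fix js assume "js \<in> index_seqs n k"
    then have "Fo (U x0 js) \<noteq> \<infinity>" using ucdc_fin[OF x0] by (auto simp: index_seqs_def)
    then show "(\<Sum>i<n. Fr (nxtp i (U x0 js)) - Fs) \<le> ?q * (Fr (U x0 js) - Fs)"
      by (rule step_sum[OF _ sc mu])
  qed
  also have "\<dots> = ?q * (\<Sum>js\<in>index_seqs n k. Fr (U x0 js) - Fs)"
    by (simp add: sum_distrib_left)
  also have "\<dots> \<le> ?q * (?q ^ k * (Fr x0 - Fs))"
    using Suc.IH q0 by (intro mult_left_mono) auto
  finally show ?case by simp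
qed

end


lemma final_scalar:
  fixes q G0 r c kk :: real
  assumes q: "0 \<le> q" "q \<le> 1 - c" and c: "0 < c" and G0: "0 \<le> G0" and r: "0 < r"
    and kb: "kk \<ge> 1 / c * ln (G0 / r)" and kk: "kk = real k"
  shows "q ^ k * G0 \<le> r"
proof (cases "G0 \<le> r")
  case True
  have "q ^ k \<le> 1" using q c by (intro power_le_one) auto
  then have "q ^ k * G0 \<le> 1 * G0" using G0 by (intro mult_right_mono) auto
  then show ?thesis using True by simp
next
  case False
  then have G0p: "G0 > 0" and lnp: "ln (G0 / r) > 0" using r by auto
  have "c * kk \<ge> ln (G0 / r)" using kb c by (simp add: field_simps)
  have "q \<le> exp (- c)" using q exp_ge_add_one_self[of "- c"] by simp
  then have "q ^ k \<le> exp (- c) ^ k" using q by (intro power_mono) auto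
  also have "\<dots> = exp (- (c * kk))" by (simp add: kk exp_of_nat_mult[symmetric] mult.commute)
  also have "\<dots> \<le> exp (- ln (G0 / r))" using \<open>c * kk \<ge> ln (G0 / r)\<close> by simp
  also have "\<dots> = r / G0" using G0p r by (simp add: exp_minus)
  finally have "q ^ k * G0 \<le> r / G0 * G0" using G0 by (intro mult_right_mono) auto
  then show ?thesis using G0p by simp
qed

theorem theorem7:
  fixes f :: "real^'N::finite \<Rightarrow> real" and gf :: "real^'N \<Rightarrow> real^'N"
    and \<sigma> :: "nat \<Rightarrow> 'N" and Nb :: "nat \<Rightarrow> nat" and n :: nat
    and B Binv :: "nat \<Rightarrow> nat \<Rightarrow> nat \<Rightarrow> real" and L :: "nat \<Rightarrow> real"
    and \<Psi> :: "nat \<Rightarrow> (nat \<Rightarrow> real) \<Rightarrow> ereal"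
    and \<mu> \<epsilon> \<rho> :: real and k :: nat and x0 :: "real^'N"
  assumes perm: "bij_betw \<sigma> {..<CARD('N)} UNIV"
    and blocks: "(\<Sum>i<n. Nb i) = CARD('N)" "\<forall>i<n. 0 < Nb i"
    and Bpd: "\<forall>i<n. pos_def_mat (B i) (Nb i)"
    and Binv: "\<forall>i<n. is_inv_mat (B i) (Binv i) (Nb i)"
    and f_convex: "convex_on UNIV f"
    and f_grad: "\<forall>x. (f has_derivative (\<lambda>h. inner (gf x) h)) (at x)"
    and L_pos: "\<forall>i<n. 0 < L i"
    and lipschitz: "\<forall>x i t. i < n \<longrightarrow> t \<in> bsub Nb i \<longrightarrow>
          dnorm Binv Nb i (\<lambda>j. blk \<sigma> Nb i (gf (x + Uemb \<sigma> Nb i t)) j - blk \<sigma> Nb i (gf x) j)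
            \<le> L i * bnorm B Nb i t"
    and Psi: "\<forall>i<n. eproper_on (bsub Nb i) (\<Psi> i) \<and> eclosed_on (bsub Nb i) (\<Psi> i)
                    \<and> econvex_on (bsub Nb i) (\<Psi> i)"
    and has_min: "\<exists>xs. \<forall>x. Fobj f \<Psi> \<sigma> Nb n xs \<le> Fobj f \<Psi> \<sigma> Nb n x"
    and strongly_convex: "\<forall>x y g. Fobj f \<Psi> \<sigma> Nb n x \<noteq> \<infinity> \<longrightarrow> Fobj f \<Psi> \<sigma> Nb n y \<noteq> \<infinity> \<longrightarrow>
          subgrad (Fobj f \<Psi> \<sigma> Nb n) y g \<longrightarrow>
          Fobj f \<Psi> \<sigma> Nb n y + ereal (inner g (x - y)) + ereal (\<mu> / 2 * Lnorm_sq L B \<sigma> Nb n (x - y))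
            \<le> Fobj f \<Psi> \<sigma> Nb n x"
    and mu_pos: "0 < \<mu>"
    and eps_pos: "0 < \<epsilon>"
    and rho: "0 < \<rho>" "\<rho> < 1"
    and x0_dom: "Fobj f \<Psi> \<sigma> Nb n x0 \<noteq> \<infinity>"
    and k_bound: "real k \<ge> real n / (1 - gamma_mu \<mu>) *
          ln (real_of_ereal (Fobj f \<Psi> \<sigma> Nb n x0 - (INF x. Fobj f \<Psi> \<sigma> Nb n x)) / (\<rho> * \<epsilon>))"
  shows "measure_pmf.prob (pmf_of_set (index_seqs n k))
           {is. Fobj f \<Psi> \<sigma> Nb n (ucdc gf L B \<Psi> \<sigma> Nb x0 is) - (INF x. Fobj f \<Psi> \<sigma> Nb n x) \<le> ereal \<epsilon>}
         \<ge> 1 - \<rho>"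
proof -
  let ?Fo = "Fobj f \<Psi> \<sigma> Nb n"
  obtain xs where xsm: "\<forall>x. ?Fo xs \<le> ?Fo x" using has_min by blast
  have xsf: "?Fo xs \<noteq> \<infinity>" using xsm x0_dom by (metis ereal_infty_less_eq(1))
  interpret S: setting2 \<sigma> Nb n f gf B Binv L \<Psi> xs
    by unfold_locales (use perm blocks(1) Bpd Binv f_convex f_grad L_pos lipschitz Psi xsm xsf in auto)
  have INF: "(INF x. ?Fo x) = ereal S.Fs"
  proof (rule antisym)
    show "(INF x. ?Fo x) \<le> ereal S.Fs"
      using INF_lower[of xs UNIV ?Fo] S.Fo_real[OF xsf] by (simp add: S.Fs_def S.Fr_def)
    show "ereal S.Fs \<le> (INF x. ?Fo x)" using S.Fo_ge by (auto intro: INF_greatest)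
  qed
  have npos: "0 < n" using blocks(1) by (cases n) auto
  define c' where "c' = 1 - gamma_mu \<mu>"
  have c': "0 < c'" "c' < 1" using mu_pos by (auto simp: c'_def gamma_mu_def field_simps)
  have q0: "0 \<le> real n - c'" using npos c' by linarith
  define G0 where "G0 = S.Fr x0 - S.Fs"
  have G0: "0 \<le> G0" using S.Fs_le[OF x0_dom] by (simp add: G0_def)
  define A where "A = index_seqs n k"
  have Afin: "finite A" and Acard: "card A = n ^ k" by (simp_all add: A_def S.finite_index_seqs S.card_index_seqs)
  define G where "G = (\<lambda>js. S.Fr (ucdc gf L B \<Psi> \<sigma> Nb x0 js) - S.Fs)"
  have Gfin: "?Fo (ucdc gf L B \<Psi> \<sigma> Nb x0 js) = ereal (S.Fr (ucdc gf L B \<Psi> \<sigma> Nb x0 js))" if "js \<in> A" for js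
    using S.ucdc_fin[OF x0_dom, of js] that S.Fo_real by (auto simp: A_def index_seqs_def S.Fr_def)
  have Gnn: "0 \<le> G js" if "js \<in> A" for js
    using S.Fs_le S.ucdc_fin[OF x0_dom, of js] that by (auto simp: G_def A_def index_seqs_def)
  have sumA: "(\<Sum>js\<in>A. G js) \<le> (real n - c') ^ k * G0"
    using S.iter_sum[OF x0_dom strongly_convex mu_pos] q0 by (simp add: A_def G_def c'_def G0_def)
  define Bad where "Bad = {js\<in>A. \<epsilon> < G js}"
  define E where "E = {js. ?Fo (ucdc gf L B \<Psi> \<sigma> Nb x0 js) - (INF x. ?Fo x) \<le> ereal \<epsilon>}"
  have AE: "A \<inter> E = A - Bad" using Gfin by (auto simp: E_def Bad_def INF G_def)
  have Bfin: "finite Bad" using Afin by (simp add: Bad_def)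
  have BA: "Bad \<subseteq> A" by (auto simp: Bad_def)
  have "\<epsilon> * real (card Bad) = (\<Sum>js\<in>Bad. \<epsilon>)" by simp
  also have "\<dots> \<le> (\<Sum>js\<in>Bad. G js)" by (intro sum_mono) (auto simp: Bad_def)
  also have "\<dots> \<le> (\<Sum>js\<in>A. G js)" using Afin BA Gnn by (intro sum_mono2) auto
  also have "\<dots> \<le> (real n - c') ^ k * G0" by (rule sumA)
  finally have cb: "\<epsilon> * real (card Bad) \<le> (real n - c') ^ k * G0" .
  define q where "q = (real n - c') / real n"
  have nk: "(real n - c') ^ k = q ^ k * real n ^ k" using npos by (simp add: q_def power_divide)
  have q: "0 \<le> q" "q \<le> 1 - c' / real n" using q0 npos by (auto simp: q_def field_simps)
  have kb: "real k \<ge> 1 / (c' / real n) * ln (G0 / (\<rho> * \<epsilon>))"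
    using k_bound S.Fo_real[OF x0_dom] by (simp add: INF c'_def G0_def S.Fr_def)
  have key: "q ^ k * G0 \<le> \<rho> * \<epsilon>"
    by (rule final_scalar[OF q(1) q(2) _ G0 _ kb refl]) (use c' npos rho eps_pos in auto)
  have "\<epsilon> * real (card Bad) \<le> \<rho> * \<epsilon> * real n ^ k"
  proof -
    have "\<epsilon> * real (card Bad) \<le> (q ^ k * G0) * real n ^ k" using cb nk by (simp add: mult_ac)
    also have "\<dots> \<le> (\<rho> * \<epsilon>) * real n ^ k" using key by (intro mult_right_mono) auto
    finally show ?thesis .
  qed
  then have cB: "real (card Bad) \<le> \<rho> * real n ^ k" using eps_pos by (simp add: mult_ac)
  have "measure_pmf.prob (pmf_of_set A) E = real (card (A \<inter> E)) / real (card A)"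
  proof (rule measure_pmf_of_set[OF _ Afin])
    have "replicate k 0 \<in> A" using npos by (auto simp: A_def index_seqs_def)
    then show "A \<noteq> {}" by blast
  qed
  also have "\<dots> = (real n ^ k - real (card Bad)) / real n ^ k"
  proof -
    have "card Bad \<le> card A" by (rule card_mono[OF Afin BA])
    then have "real (card (A - Bad)) = real (card A) - real (card Bad)"
      using BA Bfin by (simp add: card_Diff_subset of_nat_diff)
    then show ?thesis using AE Acard by simp
  qed
  also have "\<dots> \<ge> 1 - \<rho>" using cB npos by (simp add: field_simps)
  finally show ?thesis by (simp add: A_def E_def)
qed


end
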